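(* Let $\nu>0$ with $\nu\neq 2$, let $\beta$ be a constant, $K$ a smooth positive function, $C(u)=\beta K(u)$, and $J(u)=\int K(u)\,du$ an antiderivative of $K$. Then the equation $C(u)u_t=z^{-\nu}\left(K(u)z^{\nu}u_z\right)_z$ ($z>0$) admits the Lie point symmetry generators $$\widetilde Y_1=tz\partial_z+t^2\partial_t-\left(\frac{\beta}{4}z^2+\frac{1+\nu}{2}t\right)\frac{J(u)}{K(u)}\partial_u,\quad \widetilde Y_2=\frac{z}{2}\partial_z+t\partial_t,\quad \widetilde Y_3=\partial_t,\quad \widetilde Y_4=-\frac{J(u)}{K(u)}\partial_u .$$
   Context: Here $u=u(z,t)$. A vector field $Y=\xi\partial_z+\tau\partial_t+\eta\partial_u$ (coefficients depending on $z,t,u$) is an admitted Lie point symmetry generator of the equation if its second prolongation annihilates $C(u)u_t-K'(u)u_z^2-K(u)u_{zz}-\frac{\nu}{z}K(u)u_z$ on the solution manifold of the equation (equivalently, the one-parameter local group it generates maps solutions to solutions). *)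

theory Defs
  imports "HOL-Analysis.Analysis"
begin

text \<open>Jet space for one dependent variable u and two independent variables z, t.
  A jet point j assigns to the multi-index (i,k) the value of the derivative
  of u taken i times in z and k times in t; so j(0,0) = u, j(1,0) = u_z,
  j(0,1) = u_t, j(2,0) = u_zz, j(1,1) = u_zt, j(0,2) = u_tt.\<close>

type_synonym jet = "nat \<times> nat \<Rightarrow> real"
type_synonym dfun = "real \<Rightarrow> real \<Rightarrow> jet \<Rightarrow> real"

definition pd_z :: "dfun \<Rightarrow> dfun" where
  "pd_z f z t j = deriv (\<lambda>x. f x t j) z"

definition pd_t :: "dfun \<Rightarrow> dfun" where
  "pd_t f z t j = deriv (\<lambda>x. f z x j) t"

definition pd_j :: "nat \<times> nat \<Rightarrow> dfun \<Rightarrow> dfun" where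
  "pd_j a f z t j = deriv (\<lambda>v. f z t (j(a := v))) (j a)"

definition jet_idx :: "nat \<Rightarrow> (nat \<times> nat) set" where
  "jet_idx n = {(i, k). i + k \<le> n}"

text \<open>Total derivatives (acting on differential functions of order at most 2).\<close>

definition tot_z :: "dfun \<Rightarrow> dfun" where
  "tot_z f z t j = pd_z f z t j + (\<Sum>a\<in>jet_idx 2. j (Suc (fst a), snd a) * pd_j a f z t j)"

definition tot_t :: "dfun \<Rightarrow> dfun" where
  "tot_t f z t j = pd_t f z t j + (\<Sum>a\<in>jet_idx 2. j (fst a, Suc (snd a)) * pd_j a f z t j)"

text \<open>Characteristic Q = eta - xi u_z - tau u_t of Y = xi d_z + tau d_t + eta d_u.\<close>

definition charac :: "(real \<Rightarrow> real \<Rightarrow> real \<Rightarrow> real) \<Rightarrow> (real \<Rightarrow> real \<Rightarrow> real \<Rightarrow> real)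
    \<Rightarrow> (real \<Rightarrow> real \<Rightarrow> real \<Rightarrow> real) \<Rightarrow> dfun" where
  "charac \<xi> \<tau> \<eta> z t j =
     \<eta> z t (j (0,0)) - \<xi> z t (j (0,0)) * j (1,0) - \<tau> z t (j (0,0)) * j (0,1)"

definition prol_coeff :: "(real \<Rightarrow> real \<Rightarrow> real \<Rightarrow> real) \<Rightarrow> (real \<Rightarrow> real \<Rightarrow> real \<Rightarrow> real)
    \<Rightarrow> (real \<Rightarrow> real \<Rightarrow> real \<Rightarrow> real) \<Rightarrow> nat \<times> nat \<Rightarrow> dfun" where
  "prol_coeff \<xi> \<tau> \<eta> a z t j =
     (tot_z ^^ fst a) ((tot_t ^^ snd a) (charac \<xi> \<tau> \<eta>)) z t j
     + \<xi> z t (j (0,0)) * j (Suc (fst a), snd a) + \<tau> z t (j (0,0)) * j (fst a, Suc (snd a))"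

definition prol2 :: "(real \<Rightarrow> real \<Rightarrow> real \<Rightarrow> real) \<Rightarrow> (real \<Rightarrow> real \<Rightarrow> real \<Rightarrow> real)
    \<Rightarrow> (real \<Rightarrow> real \<Rightarrow> real \<Rightarrow> real) \<Rightarrow> dfun \<Rightarrow> dfun" where
  "prol2 \<xi> \<tau> \<eta> F z t j =
     \<xi> z t (j (0,0)) * pd_z F z t j + \<tau> z t (j (0,0)) * pd_t F z t j
     + (\<Sum>a\<in>jet_idx 2. prol_coeff \<xi> \<tau> \<eta> a z t j * pd_j a F z t j)"

definition admits_symmetry :: "(real \<Rightarrow> real \<Rightarrow> real \<Rightarrow> real) \<Rightarrow> (real \<Rightarrow> real \<Rightarrow> real \<Rightarrow> real)
    \<Rightarrow> (real \<Rightarrow> real \<Rightarrow> real \<Rightarrow> real) \<Rightarrow> dfun \<Rightarrow> (real \<Rightarrow> real \<Rightarrow> bool) \<Rightarrow> bool" where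
  "admits_symmetry \<xi> \<tau> \<eta> F D \<longleftrightarrow>
     (\<forall>z t j. D z t \<longrightarrow> F z t j = 0 \<longrightarrow> prol2 \<xi> \<tau> \<eta> F z t j = 0)"

definition diff_eq :: "real \<Rightarrow> (real \<Rightarrow> real) \<Rightarrow> (real \<Rightarrow> real) \<Rightarrow> dfun" where
  "diff_eq \<nu> C K z t j =
     C (j (0,0)) * j (0,1) - deriv K (j (0,0)) * (j (1,0))^2 - K (j (0,0)) * j (2,0)
     - \<nu> / z * K (j (0,0)) * j (1,0)"

definition smooth_fun :: "(real \<Rightarrow> real) \<Rightarrow> bool" where
  "smooth_fun f \<longleftrightarrow> (\<forall>n x. (deriv ^^ n) f differentiable (at x))"

end

theory Submission
  imports Defs
begin

lemma jet_idx2: "jet_idx 2 = {(0,0),(1,0),(0,1),(2,0),(1,1),(0,2)}"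
  unfolding jet_idx_def by auto

lemma sum_jet: "(\<Sum>a\<in>jet_idx 2. h a) = h(0,0)+h(1,0)+h(0,1)+h(2,0)+h(1,1)+(h(0,2)::real)"
  unfolding jet_idx2 by simp

lemma tot_z_exp: "tot_z f z t j = pd_z f z t j + j(1,0)*pd_j (0,0) f z t j + j(2,0)*pd_j (1,0) f z t j
  + j(1,1)*pd_j (0,1) f z t j + j(3,0)*pd_j (2,0) f z t j + j(2,1)*pd_j (1,1) f z t j + j(1,2)*pd_j (0,2) f z t j"
  unfolding tot_z_def sum_jet by (simp add: numeral_eq_Suc)

lemma tot_t_exp: "tot_t f z t j = pd_t f z t j + j(0,1)*pd_j (0,0) f z t j + j(1,1)*pd_j (1,0) f z t j
  + j(0,2)*pd_j (0,1) f z t j + j(2,1)*pd_j (2,0) f z t j + j(1,2)*pd_j (1,1) f z t j + j(0,3)*pd_j (0,2) f z t j"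
  unfolding tot_t_def sum_jet by (simp add: numeral_eq_Suc)


context
  fixes g g1 g2 K K2 :: "real \<Rightarrow> real" and p0 p1 b0 b1 b2 c0 c1 c2 \<beta> \<nu> :: real
  assumes gD: "\<And>x. (g has_real_derivative g1 x) (at x)"
    and g1D: "\<And>x. (g1 has_real_derivative g2 x) (at x)"
    and KD: "\<And>x. (K has_real_derivative deriv K x) (at x)"
    and K1D: "\<And>x. (deriv K has_real_derivative K2 x) (at x)"
    and Kpos: "\<And>x. K x > 0"
    and rel1: "\<And>x. K x * g1 x + deriv K x * g x = K x"
    and rel2: "\<And>x. K x * g2 x + 2 * deriv K x * g1 x + K2 x * g x = deriv K x"
    and cb2: "b2 = p1" and cb1: "b1 = 2*p0" and cc2: "c2 = - \<beta> * p1 / 4"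
    and cc1: "c1 = - (1+\<nu>) * p1 / 2"
begin

abbreviation "QQ \<equiv> (\<lambda>z t j. (c0+c1*t+c2*z^2)*g (j(0,0)) - (p1*t+p0)*z*j(1,0) - (b2*t^2+b1*t+b0)*j(0,1))"

lemma Q_eq: "charac (\<lambda>z t u. (p1*t+p0)*z) (\<lambda>z t u. b2*t^2+b1*t+b0) (\<lambda>z t u. (c0+c1*t+c2*z^2)*g u)
  = QQ"
  unfolding charac_def by (auto simp: fun_eq_iff)

lemma Qt: "tot_t QQ z t j = c1*g (j(0,0)) - p1*z*j(1,0) - (2*b2*t+b1)*j(0,1)
   + j(0,1)*((c0+c1*t+c2*z^2)*g1 (j(0,0))) - j(1,1)*((p1*t+p0)*z) - j(0,2)*(b2*t^2+b1*t+b0)"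
proof -
  have 1: "pd_t QQ z t j = c1*g (j(0,0)) - p1*z*j(1,0) - (2*b2*t+b1)*j(0,1)"
    unfolding pd_t_def by (rule DERIV_imp_deriv) (auto intro!: derivative_eq_intros)
  have 2: "pd_j (0,0) QQ z t j = (c0+c1*t+c2*z^2)*g1 (j(0,0))"
    unfolding pd_j_def by (rule DERIV_imp_deriv) (auto intro!: derivative_eq_intros gD)
  have 3: "pd_j (1,0) QQ z t j = -((p1*t+p0)*z)"
    unfolding pd_j_def by (rule DERIV_imp_deriv) (auto intro!: derivative_eq_intros)
  have 4: "pd_j (0,1) QQ z t j = -(b2*t^2+b1*t+b0)"
    unfolding pd_j_def by (rule DERIV_imp_deriv) (auto intro!: derivative_eq_intros)
  have 5: "pd_j (2,0) QQ z t j = 0" "pd_j (1,1) QQ z t j = 0" "pd_j (0,2) QQ z t j = 0"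
    unfolding pd_j_def by simp_all
  show ?thesis
    unfolding tot_t_exp 1 2 3 4 5 by (simp add: algebra_simps)
qed

abbreviation "QZ \<equiv> (\<lambda>z t j. 2*c2*z*g (j(0,0)) - (p1*t+p0)*j(1,0)
   + j(1,0)*((c0+c1*t+c2*z^2)*g1 (j(0,0))) - j(2,0)*((p1*t+p0)*z) - j(1,1)*(b2*t^2+b1*t+b0))"

lemma Qz: "tot_z QQ z t j = QZ z t j"
proof -
  have 1: "pd_z QQ z t j = 2*c2*z*g (j(0,0)) - (p1*t+p0)*j(1,0)"
    unfolding pd_z_def by (rule DERIV_imp_deriv) (auto intro!: derivative_eq_intros)
  have 2: "pd_j (0,0) QQ z t j = (c0+c1*t+c2*z^2)*g1 (j(0,0))"
    unfolding pd_j_def by (rule DERIV_imp_deriv) (auto intro!: derivative_eq_intros gD)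
  have 3: "pd_j (1,0) QQ z t j = -((p1*t+p0)*z)"
    unfolding pd_j_def by (rule DERIV_imp_deriv) (auto intro!: derivative_eq_intros)
  have 4: "pd_j (0,1) QQ z t j = -(b2*t^2+b1*t+b0)"
    unfolding pd_j_def by (rule DERIV_imp_deriv) (auto intro!: derivative_eq_intros)
  have 5: "pd_j (2,0) QQ z t j = 0" "pd_j (1,1) QQ z t j = 0" "pd_j (0,2) QQ z t j = 0"
    unfolding pd_j_def by simp_all
  show ?thesis
    unfolding tot_z_exp 1 2 3 4 5 by (simp add: algebra_simps)
qed

lemma Qzz: "tot_z (tot_z QQ) z t j = 2*c2*g (j(0,0)) + j(1,0)*2*c2*z*g1 (j(0,0)) - (p1*t+p0)*j(2,0)
   + j(1,0)*(2*c2*z*g1 (j(0,0)) + j(1,0)*((c0+c1*t+c2*z^2)*g2 (j(0,0))))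
   + j(2,0)*(-(p1*t+p0) + (c0+c1*t+c2*z^2)*g1 (j(0,0)))
   + j(2,1)*(-(b2*t^2+b1*t+b0)) + j(3,0)*(-((p1*t+p0)*z))"
proof -
  have e: "tot_z QQ = QZ" by (intro ext) (rule Qz)
  have 1: "pd_z QZ z t j = 2*c2*g (j(0,0)) + j(1,0)*2*c2*z*g1 (j(0,0)) - (p1*t+p0)*j(2,0)"
    unfolding pd_z_def by (rule DERIV_imp_deriv) (auto intro!: derivative_eq_intros simp: algebra_simps)
  have 2: "pd_j (0,0) QZ z t j = 2*c2*z*g1 (j(0,0)) + j(1,0)*((c0+c1*t+c2*z^2)*g2 (j(0,0)))"
    unfolding pd_j_def by (rule DERIV_imp_deriv) (auto intro!: derivative_eq_intros gD g1D)
  have 3: "pd_j (1,0) QZ z t j = -(p1*t+p0) + (c0+c1*t+c2*z^2)*g1 (j(0,0))"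
    unfolding pd_j_def by (rule DERIV_imp_deriv) (auto intro!: derivative_eq_intros)
  have 4: "pd_j (1,1) QZ z t j = -(b2*t^2+b1*t+b0)"
    unfolding pd_j_def by (rule DERIV_imp_deriv) (auto intro!: derivative_eq_intros)
  have 5: "pd_j (2,0) QZ z t j = -((p1*t+p0)*z)"
    unfolding pd_j_def by (rule DERIV_imp_deriv) (auto intro!: derivative_eq_intros)
  have 6: "pd_j (0,1) QZ z t j = 0" "pd_j (0,2) QZ z t j = 0"
    unfolding pd_j_def by simp_all
  show ?thesis
    unfolding e tot_z_exp 1 2 3 4 5 6 by (simp add: algebra_simps)
qed


abbreviation "FF \<equiv> diff_eq \<nu> (\<lambda>u. \<beta> * K u) K"

lemma Fparts:
  assumes z: "z > 0"
  shows "pd_z FF z t j = \<nu>/z^2 * K (j(0,0)) * j(1,0)"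
    and "pd_t FF z t j = 0"
    and "pd_j (0,0) FF z t j = \<beta> * deriv K (j(0,0)) * j(0,1) - K2 (j(0,0)) * (j(1,0))^2
          - deriv K (j(0,0)) * j(2,0) - \<nu>/z * deriv K (j(0,0)) * j(1,0)"
    and "pd_j (1,0) FF z t j = - deriv K (j(0,0)) * (2 * j(1,0)) - \<nu>/z * K (j(0,0))"
    and "pd_j (0,1) FF z t j = \<beta> * K (j(0,0))"
    and "pd_j (2,0) FF z t j = - K (j(0,0))"
    and "pd_j (1,1) FF z t j = 0"
    and "pd_j (0,2) FF z t j = 0"
proof -
  have z0[simp]: "z \<noteq> 0" using z by simp
  show "pd_z FF z t j = \<nu>/z^2 * K (j(0,0)) * j(1,0)"
    unfolding pd_z_def diff_eq_def
    by (intro DERIV_imp_deriv) (auto intro!: derivative_eq_intros simp: field_simps power2_eq_square z0)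
  show "pd_t FF z t j = 0" unfolding pd_t_def diff_eq_def by simp
  show "pd_j (0,0) FF z t j = \<beta> * deriv K (j(0,0)) * j(0,1) - K2 (j(0,0)) * (j(1,0))^2
          - deriv K (j(0,0)) * j(2,0) - \<nu>/z * deriv K (j(0,0)) * j(1,0)"
    unfolding pd_j_def diff_eq_def
    by (intro DERIV_imp_deriv) (auto intro!: derivative_eq_intros KD K1D)
  show "pd_j (1,0) FF z t j = - deriv K (j(0,0)) * (2 * j(1,0)) - \<nu>/z * K (j(0,0))"
    unfolding pd_j_def diff_eq_def
    by (intro DERIV_imp_deriv) (auto intro!: derivative_eq_intros)
  show "pd_j (0,1) FF z t j = \<beta> * K (j(0,0))"
    unfolding pd_j_def diff_eq_def
    by (intro DERIV_imp_deriv) (auto intro!: derivative_eq_intros)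
  show "pd_j (2,0) FF z t j = - K (j(0,0))"
    unfolding pd_j_def diff_eq_def
    by (intro DERIV_imp_deriv) (auto intro!: derivative_eq_intros)
  show "pd_j (1,1) FF z t j = 0" "pd_j (0,2) FF z t j = 0"
    unfolding pd_j_def diff_eq_def by simp_all
qed

lemma generic:
  "admits_symmetry (\<lambda>z t u. (p1*t+p0)*z) (\<lambda>z t u. b2*t^2+b1*t+b0) (\<lambda>z t u. (c0+c1*t+c2*z^2)*g u)
     FF (\<lambda>z t. z > 0)"
  unfolding admits_symmetry_def
proof (intro allI impI)
  fix z t j
  assume z: "z > 0" and F0: "FF z t j = 0"
  have tz: "(tot_z ^^ 2) f = tot_z (tot_z f)" "(tot_z ^^ 1) f = tot_z f" "(tot_t ^^ 2) f = tot_t (tot_t f)" "(tot_t ^^ 1) f = tot_t f" for f by (simp_all add: numeral_2_eq_2)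
  note Fp = Fparts[OF z]
  have P: "prol2 (\<lambda>z t u. (p1*t+p0)*z) (\<lambda>z t u. b2*t^2+b1*t+b0) (\<lambda>z t u. (c0+c1*t+c2*z^2)*g u) FF z t j
    = (p1*t+p0)*z * pd_z FF z t j + (b2*t^2+b1*t+b0) * pd_t FF z t j
      + (QQ z t j + (p1*t+p0)*z*j(1,0) + (b2*t^2+b1*t+b0)*j(0,1)) * pd_j (0,0) FF z t j
      + (tot_z QQ z t j + (p1*t+p0)*z*j(2,0) + (b2*t^2+b1*t+b0)*j(1,1)) * pd_j (1,0) FF z t j
      + (tot_t QQ z t j + (p1*t+p0)*z*j(1,1) + (b2*t^2+b1*t+b0)*j(0,2)) * pd_j (0,1) FF z t j
      + (tot_z (tot_z QQ) z t j + (p1*t+p0)*z*j(3,0) + (b2*t^2+b1*t+b0)*j(2,1)) * pd_j (2,0) FF z t j"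
    unfolding prol2_def sum_jet prol_coeff_def Q_eq Fp(7,8)
    by (simp add: tz numeral_2_eq_2 numeral_3_eq_3)
  define u where "u = j(0,0)"
  have Kp: "K u > 0" using Kpos by simp
  have uzz: "j(2,0) = (\<beta> * K u * j(0,1) - deriv K u * (j(1,0))^2 - \<nu>/z * K u * j(1,0)) / K u"
    using F0 Kp unfolding diff_eq_def u_def[symmetric] by (simp add: field_simps)
  have G1: "g1 u = (K u - deriv K u * g u) / K u" using rel1[of u] Kp by (simp add: field_simps)
  have G2: "g2 u = (deriv K u - 2 * deriv K u * g1 u - K2 u * g u) / K u" using rel2[of u] Kp by (simp add: field_simps)
  show "prol2 (\<lambda>z t u. (p1*t+p0)*z) (\<lambda>z t u. b2*t^2+b1*t+b0) (\<lambda>z t u. (c0+c1*t+c2*z^2)*g u) FF z t j = 0"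
    unfolding P unfolding Fp Qt Qz Qzz unfolding u_def[symmetric] unfolding uzz G2 unfolding G1 cb2 cb1 cc2 cc1
    using Kp z by (simp add: field_simps) (simp add: algebra_simps power2_eq_square)?
qed

end

theorem mainTheorem4:
  fixes \<nu> \<beta> :: real and K C J :: "real \<Rightarrow> real"
  assumes "\<nu> > 0" and "\<nu> \<noteq> 2"
    and "smooth_fun K" and "\<forall>u. K u > 0"
    and "\<forall>u. C u = \<beta> * K u"
    and "\<forall>u. (J has_real_derivative K u) (at u)"
  shows "admits_symmetry (\<lambda>z t u. t * z) (\<lambda>z t u. t^2)
           (\<lambda>z t u. - (\<beta> / 4 * z^2 + (1 + \<nu>) / 2 * t) * (J u / K u))
           (diff_eq \<nu> C K) (\<lambda>z t. z > 0)
    \<and> admits_symmetry (\<lambda>z t u. z / 2) (\<lambda>z t u. t) (\<lambda>z t u. 0)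
           (diff_eq \<nu> C K) (\<lambda>z t. z > 0)
    \<and> admits_symmetry (\<lambda>z t u. 0) (\<lambda>z t u. 1) (\<lambda>z t u. 0)
           (diff_eq \<nu> C K) (\<lambda>z t. z > 0)
    \<and> admits_symmetry (\<lambda>z t u. 0) (\<lambda>z t u. 0) (\<lambda>z t u. - (J u / K u))
           (diff_eq \<nu> C K) (\<lambda>z t. z > 0)"
proof -
  have Kpos: "\<And>x. K x > 0" using assms(4) by simp
  have K0: "\<And>x. K x \<noteq> 0" using Kpos by (metis less_irrefl)
  have JD: "\<And>x. (J has_real_derivative K x) (at x)" using assms(6) by simp
  have Ceq: "C = (\<lambda>u. \<beta> * K u)" using assms(5) by auto
  have KD: "\<And>x. (K has_real_derivative deriv K x) (at x)"
  proof -
    fix x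
    have "((deriv ^^ 0) K) differentiable (at x)" using assms(3) unfolding smooth_fun_def by blast
    then show "(K has_real_derivative deriv K x) (at x)" by (simp add: DERIV_deriv_iff_real_differentiable)
  qed
  have K1D: "\<And>x. (deriv K has_real_derivative deriv (deriv K) x) (at x)"
  proof -
    fix x
    have "((deriv ^^ 1) K) differentiable (at x)" using assms(3) unfolding smooth_fun_def by blast
    then show "(deriv K has_real_derivative deriv (deriv K) x) (at x)" by (simp add: DERIV_deriv_iff_real_differentiable)
  qed
  define g where "g = (\<lambda>x. J x / K x)"
  define g1 where "g1 = (\<lambda>x. (K x - deriv K x * g x) / K x)"
  define g2 where "g2 = (\<lambda>x. (deriv K x - 2 * deriv K x * g1 x - deriv (deriv K) x * g x) / K x)"
  have gD: "\<And>x. (g has_real_derivative g1 x) (at x)"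
    unfolding g_def g1_def
    by (auto intro!: derivative_eq_intros JD KD simp: K0 field_simps power2_eq_square)
  have g1D: "\<And>x. (g1 has_real_derivative g2 x) (at x)"
    unfolding g2_def g1_def g_def
    by (auto intro!: derivative_eq_intros JD KD K1D simp: K0 field_simps power2_eq_square)
  have rel1: "\<And>x. K x * g1 x + deriv K x * g x = K x"
    unfolding g1_def using K0 by (simp add: field_simps)
  have rel2: "\<And>x. K x * g2 x + 2 * deriv K x * g1 x + deriv (deriv K) x * g x = deriv K x"
    unfolding g2_def using K0 by (simp add: field_simps)
  note G = generic[OF gD g1D KD K1D Kpos rel1 rel2]
  have A1: "admits_symmetry (\<lambda>z t u. (1*t+0)*z) (\<lambda>z t u. 1*t^2+2*0*t+0)
      (\<lambda>z t u. (0+(-(1+\<nu>)*1/2)*t+(-\<beta>*1/4)*z^2)*g u) (diff_eq \<nu> (\<lambda>u. \<beta> * K u) K) (\<lambda>z t. z > 0)"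
    by (rule G) simp_all
  have A2: "admits_symmetry (\<lambda>z t u. (0*t+1/2)*z) (\<lambda>z t u. 0*t^2+2*(1/2)*t+0)
      (\<lambda>z t u. (0+(-(1+\<nu>)*0/2)*t+(-\<beta>*0/4)*z^2)*g u) (diff_eq \<nu> (\<lambda>u. \<beta> * K u) K) (\<lambda>z t. z > 0)"
    by (rule G) simp_all
  have A3: "admits_symmetry (\<lambda>z t u. (0*t+0)*z) (\<lambda>z t u. 0*t^2+2*0*t+1)
      (\<lambda>z t u. (0+(-(1+\<nu>)*0/2)*t+(-\<beta>*0/4)*z^2)*g u) (diff_eq \<nu> (\<lambda>u. \<beta> * K u) K) (\<lambda>z t. z > 0)"
    by (rule G) simp_all
  have A4: "admits_symmetry (\<lambda>z t u. (0*t+0)*z) (\<lambda>z t u. 0*t^2+2*0*t+0)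
      (\<lambda>z t u. (-1+(-(1+\<nu>)*0/2)*t+(-\<beta>*0/4)*z^2)*g u) (diff_eq \<nu> (\<lambda>u. \<beta> * K u) K) (\<lambda>z t. z > 0)"
    by (rule G) simp_all
  have e1: "(\<lambda>z t u. (0+(-(1+\<nu>)*1/2)*t+(-\<beta>*1/4)*z^2)*g u)
      = (\<lambda>z t u. - (\<beta> / 4 * z^2 + (1 + \<nu>) / 2 * t) * (J u / K u))"
    unfolding g_def by (intro ext) (simp add: K0 divide_simps algebra_simps)
  have e2: "(\<lambda>z t u::real. (0*t+1/2)*z) = (\<lambda>(z::real) (t::real) u. z/2)" by (simp add: fun_eq_iff)
  show ?thesis
    unfolding Ceq
    using A1[unfolded e1] A2[unfolded e2] A3 A4 by (simp add: g_def)
qed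

end
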